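(* Assume the setting and Assumptions (A1), (A2), (A3) in the context, and let $\eta>0$, $\zeta>\tfrac12$, $\rho\in(0,1)$ with $\alpha_0\le\frac{\rho(2\zeta-1)}{\zeta L_{\nabla f}\tilde B}$. Then there exist constants $C_1,C_2>0$ (independent of $K$) such that for all $K\ge1$ $$\min_{0\le k\le K-1}\mathbb{E}\|\nabla f(\theta^k)\|^2\le\frac{C_1}{K\alpha_K}+C_2L_K,\qquad L_K\coloneqq\frac{1}{K\alpha_K}\sum_{k=0}^{K-1}\alpha_k\epsilon_k^2 .$$ Moreover, if $\lim_{K\to\infty}L_K=0$, then $\lim_{K\to\infty}\min_{0\le k\le K-1}\mathbb{E}\|\nabla f(\theta^k)\|=0$.
   Context: Setting: $\theta\in\mathbb{R}^d$; $f_1,\dots,f_m:\mathbb{R}^d\to\mathbb{R}$, $f=\frac1m\sum_i f_i$. $\mathcal D$ is a distribution on $v\in\mathbb{R}^m$ with independent entries, $\mathbb{E}[v_i]=1$, $\mathbb{E}[v_i^2]<\infty$; $f_v=\frac1m\sum_iv_if_i$. Inexact stochastic gradient $z_v(\theta)=\nabla f_v(\theta)+e_v(\theta)$. Algorithm ISGD: deterministic $\theta^0$; for $k=0,1,\dots$ sample $v^k\sim\mathcal D$ independently of the past, $\theta^{k+1}=\theta^k-\alpha_kz_{v^k}(\theta^k)$, with positive step sizes $\alpha_k$ and non-negative accuracies $\epsilon_k$. (A1): each $f_i$ is $C^1$ with Lipschitz gradient and bounded below; $f$ has $L_{\nabla f}$-Lipschitz gradient and is bounded below by $f^{\inf}$;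 $A,B,C\ge0$ satisfy $\mathbb{E}_v\|\nabla f_v(\theta)\|^2\le2A(f(\theta)-f^{\inf})+B\|\nabla f(\theta)\|^2+C$ for all $\theta$. (A2): $\mathbb{E}[\|e_{v^k}(\theta^k)\|^2\mid\theta^k]\le\epsilon_k^2$ for all $k$, $\{\epsilon_k\}$ deterministic. (A3): $\{\alpha_k\}$ is positive and non-increasing, $\sum_{k}\alpha_k^2<\infty$, and $\lim_{k\to\infty}\frac{1}{k\alpha_k}=0$. Notation: $\tilde B=\frac{1+\eta}{\eta}B$. *)

theory Defs
  imports "HOL-Analysis.Analysis" "HOL-Probability.Probability"
begin

text \<open>Weighted average (1/m) * sum_i v_i F_i(x), m = CARD('m).
  With v = all-ones this is f = (1/m) sum_i f_i; with F = gradients it is the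
  gradient of f_v (gradient is linear).\<close>
definition wavg :: "real^'m::finite \<Rightarrow> ('m \<Rightarrow> 'x \<Rightarrow> 'y::real_vector) \<Rightarrow> 'x \<Rightarrow> 'y" where
  "wavg v F x = (1 / real CARD('m)) *\<^sub>R (\<Sum>i\<in>UNIV. (v $ i) *\<^sub>R F i x)"

definition ones :: "real^'m::finite" where
  "ones = (\<chi> i. 1)"

end

theory Submission
  imports Defs
begin

lemma descent:
  fixes f :: "'a::real_inner \<Rightarrow> real"
  assumes fd: "\<And>x. (f has_derivative (\<lambda>h. h \<bullet> g x)) (at x)"
    and gl: "\<And>x y. norm (g x - g y) \<le> L * norm (x - y)"
  shows "f y \<le> f x + g x \<bullet> (y - x) + L / 2 * (norm (y - x))^2"
proof -
  define d where "d = y - x"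
  define \<psi> where "\<psi> t = f (x + t *\<^sub>R d) - t * (g x \<bullet> d) - L / 2 * t^2 * (norm d)^2" for t :: real
  have der: "(\<psi> has_real_derivative (g (x + t *\<^sub>R d) \<bullet> d - g x \<bullet> d - L * t * (norm d)^2)) (at t)" for t
  proof -
    have h1: "((\<lambda>t. x + t *\<^sub>R d) has_derivative (\<lambda>s. s *\<^sub>R d)) (at t)"
      by (auto intro!: derivative_eq_intros)
    have "((\<lambda>t. f (x + t *\<^sub>R d)) has_derivative (\<lambda>s. (s *\<^sub>R d) \<bullet> g (x + t *\<^sub>R d))) (at t)"
      using has_derivative_compose[OF h1 fd] by simp
    then have "((\<lambda>t. f (x + t *\<^sub>R d)) has_real_derivative (g (x + t *\<^sub>R d) \<bullet> d)) (at t)"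
    proof -
      have e: "(\<lambda>s. (s *\<^sub>R d) \<bullet> g (x + t *\<^sub>R d)) = (*) (g (x + t *\<^sub>R d) \<bullet> d)"
        by (auto simp: fun_eq_iff inner_commute)
      show ?thesis using \<open>((\<lambda>t. f (x + t *\<^sub>R d)) has_derivative _) _\<close> unfolding e has_field_derivative_def .
    qed
    then show ?thesis unfolding \<psi>_def
      by (auto intro!: derivative_eq_intros simp: power2_eq_square)
  qed
  have nonpos: "g (x + t *\<^sub>R d) \<bullet> d - g x \<bullet> d - L * t * (norm d)^2 \<le> 0" if "0 \<le> t" for t
  proof -
    have "g (x + t *\<^sub>R d) \<bullet> d - g x \<bullet> d = (g (x + t *\<^sub>R d) - g x) \<bullet> d" by (simp add: inner_diff_left)
    also have "\<dots> \<le> norm (g (x + t *\<^sub>R d) - g x) * norm d" by (rule norm_cauchy_schwarz)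
    also have "\<dots> \<le> (L * norm (t *\<^sub>R d)) * norm d"
      using gl[of "x + t *\<^sub>R d" x] by (simp add: mult_right_mono)
    also have "\<dots> = L * t * (norm d)^2" using that by (simp add: power2_eq_square)
    finally show ?thesis by simp
  qed
  have "\<psi> 1 \<le> \<psi> 0"
  proof (rule DERIV_nonpos_imp_nonincreasing[of 0 1])
    fix t :: real assume "0 \<le> t" "t \<le> 1"
    then show "\<exists>y. (\<psi> has_real_derivative y) (at t) \<and> y \<le> 0" using der[of t] nonpos[of t] by blast
  qed simp
  then show ?thesis unfolding \<psi>_def d_def by (simp add: algebra_simps)
qed

lemma wavg_ones_deriv:
  fixes F :: "'m::finite \<Rightarrow> 'a::real_inner \<Rightarrow> real"
  assumes "\<And>i x. GDERIV (F i) x :> G i x"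
  shows "(wavg ones F has_derivative (\<lambda>h. h \<bullet> wavg ones G x)) (at x)"
proof -
  have d: "\<And>i. (F i has_derivative (\<lambda>h. h \<bullet> G i x)) (at x)" using assms by (simp add: gderiv_def)
  have "((\<lambda>x. (1 / real CARD('m)) *\<^sub>R (\<Sum>i\<in>UNIV. (ones $ i) *\<^sub>R F i x)) has_derivative
     (\<lambda>h. (1 / real CARD('m)) *\<^sub>R (\<Sum>i\<in>UNIV. (ones $ i) *\<^sub>R (h \<bullet> G i x)))) (at x)"
    by (intro has_derivative_scaleR_right has_derivative_sum has_derivative_scaleR_right d)
  moreover have "(\<lambda>h. (1 / real CARD('m)) *\<^sub>R (\<Sum>i\<in>UNIV. (ones $ i) *\<^sub>R (h \<bullet> G i x))) = (\<lambda>h. h \<bullet> wavg ones G x)"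
    by (simp add: wavg_def inner_sum_right fun_eq_iff)
  ultimately show ?thesis by (simp add: wavg_def[abs_def])
qed


lemma young_inner:
  fixes a b :: "'a::real_inner"
  assumes "z > 0"
  shows "- (a \<bullet> b) \<le> (norm a)^2 / (2*z) + z * (norm b)^2 / 2"
proof -
  have "0 \<le> (norm (a + z *\<^sub>R b))^2" by simp
  also have "(norm (a + z *\<^sub>R b))^2 = (norm a)^2 + 2 * z * (a \<bullet> b) + z^2 * (norm b)^2"
    unfolding power2_norm_eq_inner by (simp add: inner_add_left inner_add_right inner_commute power2_eq_square algebra_simps)
  finally have "- (a \<bullet> b) * (2*z) \<le> (norm a)^2 + z^2 * (norm b)^2" by (simp add: algebra_simps)
  then show ?thesis using assms by (simp add: field_simps power2_eq_square)
qed

lemma sq_sum_bound: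
  fixes a b :: "'a::real_inner"
  assumes "\<eta> > 0"
  shows "(norm (a + b))^2 \<le> (1 + 1/\<eta>) * (norm a)^2 + (1 + \<eta>) * (norm b)^2"
proof -
  have "(norm (a + b))^2 = (norm a)^2 + 2 * (a \<bullet> b) + (norm b)^2"
    by (simp add: power2_norm_eq_inner inner_add_left inner_add_right inner_commute)
  moreover have "2 * (a \<bullet> b) \<le> (norm a)^2 / \<eta> + \<eta> * (norm b)^2"
    using young_inner[of \<eta> "-a" b] assms by (simp add: field_simps)
  ultimately show ?thesis by (simp add: algebra_simps)
qed

lemma step_ineq:
  fixes gf gv e x :: "'a::real_inner"
  assumes desc: "f (x - \<alpha> *\<^sub>R (gv + e)) \<le> f x + gf \<bullet> (- (\<alpha> *\<^sub>R (gv + e))) + L / 2 * (norm (- (\<alpha> *\<^sub>R (gv + e))))^2"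
    and L: "L \<ge> 0" and al: "\<alpha> > 0" and z: "\<zeta> > 0" and eta: "\<eta> > 0"
  shows "f (x - \<alpha> *\<^sub>R (gv + e)) - c \<le>
     ((f x - c) - \<alpha> * (gf \<bullet> gv) + \<alpha> * (norm gf)^2 / (2*\<zeta>) + L * \<alpha>^2 * (1 + 1/\<eta>) / 2 * (norm gv)^2)
     + (\<alpha> * \<zeta> / 2 + L * \<alpha>^2 * (1 + \<eta>) / 2) * (norm e)^2"
proof -
  have n: "(norm (- (\<alpha> *\<^sub>R (gv + e))))^2 = \<alpha>^2 * (norm (gv + e))^2"
    using al by (simp add: power_mult_distrib)
  have i: "gf \<bullet> (- (\<alpha> *\<^sub>R (gv + e))) = - \<alpha> * (gf \<bullet> gv) + \<alpha> * (- (gf \<bullet> e))"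
    by (simp add: inner_add_right algebra_simps)
  have y: "\<alpha> * (- (gf \<bullet> e)) \<le> \<alpha> * ((norm gf)^2 / (2*\<zeta>) + \<zeta> * (norm e)^2 / 2)"
    using young_inner[OF z, of gf e] al by (intro mult_left_mono) auto
  have s: "L / 2 * (\<alpha>^2 * (norm (gv + e))^2) \<le> L / 2 * (\<alpha>^2 * ((1 + 1/\<eta>) * (norm gv)^2 + (1 + \<eta>) * (norm e)^2))"
    using sq_sum_bound[OF eta, of gv e] L by (intro mult_left_mono) auto
  have d2: "f (x - \<alpha> *\<^sub>R (gv + e)) \<le> f x - \<alpha> * (gf \<bullet> gv) + \<alpha> * (- (gf \<bullet> e)) + L / 2 * (\<alpha>^2 * (norm (gv + e))^2)"
    using desc unfolding n i by simp
  have e1: "\<alpha> * ((norm gf)^2 / (2*\<zeta>) + \<zeta> * (norm e)^2 / 2) = \<alpha> * (norm gf)^2 / (2*\<zeta>) + \<alpha> * \<zeta> / 2 * (norm e)^2"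
    by (simp add: algebra_simps)
  have e2: "L / 2 * (\<alpha>^2 * ((1 + 1/\<eta>) * (norm gv)^2 + (1 + \<eta>) * (norm e)^2)) = L * \<alpha>^2 * (1 + 1/\<eta>) / 2 * (norm gv)^2 + L * \<alpha>^2 * (1 + \<eta>) / 2 * (norm e)^2"
    using eta by (simp add: field_simps)
  have e3: "(\<alpha> * \<zeta> / 2 + L * \<alpha>^2 * (1 + \<eta>) / 2) * (norm e)^2 = \<alpha> * \<zeta> / 2 * (norm e)^2 + L * \<alpha>^2 * (1 + \<eta>) / 2 * (norm e)^2"
    by (simp add: algebra_simps)
  show ?thesis using d2 y s unfolding e1 e2 e3 by linarith
qed

lemma nn_split:
  fixes S P Q :: "'b \<Rightarrow> real"
  assumes le: "\<And>v. S v \<le> P v + Q v" and S0: "\<And>v. 0 \<le> S v" and Q0: "\<And>v. 0 \<le> Q v"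
    and Pint: "integrable N P" and Qm: "Q \<in> borel_measurable N"
    and Pb: "integral\<^sup>L N P \<le> \<beta>" and g: "\<gamma> \<ge> 0"
  shows "(\<integral>\<^sup>+ v. ennreal (S v) \<partial>N) + ennreal \<gamma> \<le> ennreal (\<beta> + \<gamma>) + (\<integral>\<^sup>+ v. ennreal (Q v) \<partial>N)"
proof (cases "(\<integral>\<^sup>+ v. ennreal (Q v) \<partial>N) = \<infinity>")
  case True then show ?thesis by simp
next
  case False
  have Qint: "integrable N Q"
    using False Qm Q0 by (intro integrableI_nonneg) (auto simp: less_top)
  have PQ: "integrable N (\<lambda>v. P v + Q v)" using Pint Qint by auto
  have "(\<integral>\<^sup>+ v. ennreal (S v) \<partial>N) \<le> (\<integral>\<^sup>+ v. ennreal (P v + Q v) \<partial>N)"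
    using le by (intro nn_integral_mono) (auto intro: ennreal_leI)
  also have "\<dots> = ennreal (integral\<^sup>L N (\<lambda>v. P v + Q v))"
    using PQ le S0 by (intro nn_integral_eq_integral) (auto intro: order_trans)
  also have "integral\<^sup>L N (\<lambda>v. P v + Q v) = integral\<^sup>L N P + integral\<^sup>L N Q"
    using Pint Qint by simp
  finally have A: "(\<integral>\<^sup>+ v. ennreal (S v) \<partial>N) \<le> ennreal (integral\<^sup>L N P + integral\<^sup>L N Q)" .
  have Qi: "(\<integral>\<^sup>+ v. ennreal (Q v) \<partial>N) = ennreal (integral\<^sup>L N Q)"
    using Qint Q0 by (intro nn_integral_eq_integral) auto
  have Q0i: "integral\<^sup>L N Q \<ge> 0" using Q0 by simp
  have "(\<integral>\<^sup>+ v. ennreal (S v) \<partial>N) + ennreal \<gamma> \<le> ennreal (integral\<^sup>L N P + integral\<^sup>L N Q) + ennreal \<gamma>"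
    using A by (rule add_right_mono)
  also have "\<dots> \<le> ennreal (integral\<^sup>L N P + integral\<^sup>L N Q + \<gamma>)"
  proof -
    have "0 \<le> integral\<^sup>L N (\<lambda>v. P v + Q v)" using le S0 by (intro integral_nonneg_AE) (auto intro: order_trans)
    then have "0 \<le> integral\<^sup>L N P + integral\<^sup>L N Q" using Pint Qint by simp
    then show ?thesis using g by (simp add: ennreal_plus)
  qed
  also have "\<dots> \<le> ennreal ((\<beta> + \<gamma>) + integral\<^sup>L N Q)"
    using Pb by (intro ennreal_leI) simp
  also have "\<dots> \<le> ennreal (\<beta> + \<gamma>) + ennreal (integral\<^sup>L N Q)"
    using Q0i by (cases "\<beta> + \<gamma> \<ge> 0") (auto simp: ennreal_plus ennreal_neg intro: ennreal_leI)
  finally show ?thesis unfolding Qi .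
qed


primrec iterw :: "(nat \<Rightarrow> 'x \<Rightarrow> 'v \<Rightarrow> 'x) \<Rightarrow> 'x \<Rightarrow> (nat \<Rightarrow> 'v) \<Rightarrow> nat \<Rightarrow> 'x" where
  "iterw s x0 w 0 = x0"
| "iterw s x0 w (Suc k) = s k (iterw s x0 w k) (w k)"

lemma iterw_cong: "(\<And>j. j < k \<Longrightarrow> w j = w' j) \<Longrightarrow> iterw s x0 w k = iterw s x0 w' k"
  by (induction k) auto

lemma iterw_meas:
  fixes s :: "nat \<Rightarrow> 'x::topological_space \<Rightarrow> 'v::topological_space \<Rightarrow> 'x"
  assumes sm: "\<And>k. (\<lambda>p. s k (fst p) (snd p)) \<in> borel_measurable (borel \<Otimes>\<^sub>M borel)"
  shows "k \<le> n \<Longrightarrow> (\<lambda>w. iterw s x0 w k) \<in> borel_measurable (PiM {..<n} (\<lambda>_. borel))"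
proof (induction k)
  case 0 then show ?case by simp
next
  case (Suc k)
  have p: "(\<lambda>w. (iterw s x0 w k, w k)) \<in> measurable (PiM {..<n} (\<lambda>_. borel)) (borel \<Otimes>\<^sub>M borel)"
    using Suc by (intro measurable_Pair) (auto intro!: measurable_component_singleton)
  have "(\<lambda>w. s k (fst (iterw s x0 w k, w k)) (snd (iterw s x0 w k, w k))) \<in> borel_measurable (PiM {..<n} (\<lambda>_. borel))"
    using measurable_comp[OF p sm[of k]] by (simp add: comp_def)
  then show ?case by simp
qed

lemma indep_nn:
  fixes X Y :: "'w \<Rightarrow> 'c" and h1 :: "'c \<Rightarrow> 'a::topological_space" and h2 :: "'c \<Rightarrow> 'b::topological_space"
  assumes P: "prob_space M" and ind: "prob_space.indep_var M S X T Y"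
    and h1: "h1 \<in> measurable S borel" and h2: "h2 \<in> measurable T borel"
    and law: "distr M borel (\<lambda>\<omega>. h2 (Y \<omega>)) = D"
    and phi: "\<phi> \<in> borel_measurable (borel \<Otimes>\<^sub>M borel)"
  shows "(\<integral>\<^sup>+\<omega>. \<phi> (h1 (X \<omega>), h2 (Y \<omega>)) \<partial>M) = (\<integral>\<^sup>+\<omega>. (\<integral>\<^sup>+v. \<phi> (h1 (X \<omega>), v) \<partial>D) \<partial>M)"
proof -
  interpret prob_space M by fact
  have e: "distr M S X \<Otimes>\<^sub>M distr M T Y = distr M (S \<Otimes>\<^sub>M T) (\<lambda>x. (X x, Y x))"
    and Xm: "X \<in> measurable M S" and Ym: "Y \<in> measurable M T"
    using ind[unfolded indep_var_distribution_eq] by auto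
  have DY: "prob_space (distr M T Y)" using Ym by (rule prob_space_distr)
  then have sfY: "sigma_finite_measure (distr M T Y)" by (simp add: prob_space_imp_sigma_finite)
  have D: "prob_space D" unfolding law[symmetric] using Ym h2 by (intro prob_space_distr) simp
  then have sf: "sigma_finite_measure D" by (simp add: prob_space_imp_sigma_finite)
  have pm: "(\<lambda>x. (X x, Y x)) \<in> measurable M (S \<Otimes>\<^sub>M T)" using Xm Ym by (intro measurable_Pair)
  have phim: "(\<lambda>p. \<phi> (h1 (fst p), h2 (snd p))) \<in> borel_measurable (S \<Otimes>\<^sub>M T)"
    by (rule measurable_compose[OF _ phi]) (intro measurable_Pair measurable_compose[OF measurable_fst h1] measurable_compose[OF measurable_snd h2])
  have phim2: "(\<lambda>p. \<phi> (h1 (fst p), h2 (snd p))) \<in> borel_measurable (distr M S X \<Otimes>\<^sub>M distr M T Y)"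
  proof -
    have "sets (distr M S X \<Otimes>\<^sub>M distr M T Y) = sets (S \<Otimes>\<^sub>M T)" by (intro sets_pair_measure_cong) simp_all
    then show ?thesis by (subst measurable_cong_sets[OF _ refl]) (assumption, rule phim)
  qed
  have psim: "(\<lambda>x. \<integral>\<^sup>+v. \<phi> (x, v) \<partial>D) \<in> borel_measurable borel"
  proof -
    have "\<phi> \<in> borel_measurable (borel \<Otimes>\<^sub>M D)"
    proof -
      have "sets (borel \<Otimes>\<^sub>M D) = sets (borel \<Otimes>\<^sub>M borel)" using law[symmetric] by (intro sets_pair_measure_cong) simp_all
      then show ?thesis by (subst measurable_cong_sets[OF _ refl]) (assumption, rule phi)
    qed
    then show ?thesis by (rule sigma_finite_measure.borel_measurable_nn_integral_fst[OF sf])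
  qed
  have "(\<integral>\<^sup>+\<omega>. \<phi> (h1 (X \<omega>), h2 (Y \<omega>)) \<partial>M) = (\<integral>\<^sup>+p. \<phi> (h1 (fst p), h2 (snd p)) \<partial>distr M (S \<Otimes>\<^sub>M T) (\<lambda>x. (X x, Y x)))"
    using pm phim by (simp add: nn_integral_distr)
  also have "\<dots> = (\<integral>\<^sup>+p. \<phi> (h1 (fst p), h2 (snd p)) \<partial>(distr M S X \<Otimes>\<^sub>M distr M T Y))" using e by simp
  also have "\<dots> = (\<integral>\<^sup>+x. (\<integral>\<^sup>+y. \<phi> (h1 x, h2 y) \<partial>distr M T Y) \<partial>distr M S X)"
    using phim2 by (simp add: sigma_finite_measure.nn_integral_fst[OF sfY, symmetric])
  also have "\<dots> = (\<integral>\<^sup>+x. (\<integral>\<^sup>+v. \<phi> (h1 x, v) \<partial>D) \<partial>distr M S X)"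
  proof (intro nn_integral_cong)
    fix x assume x: "x \<in> space (distr M S X)"
    have m1: "(\<lambda>v. \<phi> (h1 x, v)) \<in> borel_measurable borel" using measurable_Pair2[OF phi, of "h1 x"] by simp
    have "(\<integral>\<^sup>+y. \<phi> (h1 x, h2 y) \<partial>distr M T Y) = (\<integral>\<^sup>+\<omega>. \<phi> (h1 x, h2 (Y \<omega>)) \<partial>M)"
      using Ym h2 m1 by (simp add: nn_integral_distr)
    also have "\<dots> = (\<integral>\<^sup>+v. \<phi> (h1 x, v) \<partial>distr M borel (\<lambda>\<omega>. h2 (Y \<omega>)))"
      using Ym h2 m1 by (simp add: nn_integral_distr)
    finally show "(\<integral>\<^sup>+y. \<phi> (h1 x, h2 y) \<partial>distr M T Y) = (\<integral>\<^sup>+v. \<phi> (h1 x, v) \<partial>D)" using law by simp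
  qed
  also have "\<dots> = (\<integral>\<^sup>+\<omega>. (\<integral>\<^sup>+v. \<phi> (h1 (X \<omega>), v) \<partial>D) \<partial>M)"
    using Xm h1 psim by (simp add: nn_integral_distr)
  finally show ?thesis .
qed

lemma prod_le_exp:
  fixes t :: "nat \<Rightarrow> real"
  assumes "\<And>j. t j \<ge> 0"
  shows "(\<Prod>j<k. 1 + t j) \<le> exp (\<Sum>j<k. t j)"
proof -
  have "(\<Prod>j<k. 1 + t j) \<le> (\<Prod>j<k. exp (t j))"
    using assms by (intro prod_mono) (auto simp: add_nonneg_nonneg exp_ge_add_one_self)
  also have "\<dots> = exp (\<Sum>j<k. t j)" by (simp add: exp_sum)
  finally show ?thesis .
qed

lemma telescope:
  fixes d g a b \<alpha> :: "nat \<Rightarrow> real"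
  assumes rec: "\<And>k. d (Suc k) + \<alpha> k * c * g k \<le> a k * d k + b k"
    and a1: "\<And>k. a k \<ge> 1" and d0: "\<And>k. d k \<ge> 0"
  shows "d K / (\<Prod>j<K. a j) + (\<Sum>k<K. \<alpha> k * c * g k / (\<Prod>j<Suc k. a j)) \<le> d 0 + (\<Sum>k<K. b k / (\<Prod>j<Suc k. a j))"
proof (induction K)
  case 0 then show ?case by simp
next
  case (Suc K)
  have Wpos: "(\<Prod>j<Suc K. a j) > 0" using a1 by (intro prod_pos) (auto intro: less_le_trans[of 0 1])
  have W: "(\<Prod>j<Suc K. a j) = a K * (\<Prod>j<K. a j)" by simp
  have aK: "a K > 0" using a1[of K] by simp
  have "d (Suc K) / (\<Prod>j<Suc K. a j) + \<alpha> K * c * g K / (\<Prod>j<Suc K. a j) \<le> (a K * d K + b K) / (\<Prod>j<Suc K. a j)"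
    using rec[of K] Wpos by (simp add: add_divide_distrib[symmetric] divide_right_mono)
  also have "\<dots> = d K / (\<Prod>j<K. a j) + b K / (\<Prod>j<Suc K. a j)"
    using aK unfolding W by (simp add: add_divide_distrib)
  finally show ?case using Suc by simp
qed


lemma enn_aux:
  fixes x s :: real
  assumes "0 \<le> x" "0 < s"
  shows "ennreal (x / (2 * s) + s / 2) = ennreal (1 / (2 * s)) * ennreal x + ennreal (s / 2)"
proof -
  have e1: "ennreal (x / (2 * s) + s / 2) = ennreal (x / (2 * s)) + ennreal (s / 2)"
    by (rule ennreal_plus) (use assms in auto)
  have e2: "ennreal (x / (2 * s)) = ennreal (1 / (2 * s) * x)" by simp
  have e3: "ennreal (1 / (2 * s) * x) = ennreal (1 / (2 * s)) * ennreal x"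
    by (rule ennreal_mult) (use assms in auto)
  show ?thesis unfolding e1 e2 e3 ..
qed

lemma alg_eq:
  fixes c Q P A0 K2 E :: real
  assumes "c \<noteq> 0" "Q \<noteq> 0"
  shows "(P / c) * (A0 + K2 * E) / Q = (P * A0 / c) / Q + (P * K2 / c) * ((1 / Q) * E)"
  using assms by (simp add: field_simps)

lemma final_real:
  fixes d g a b \<alpha> \<epsilon> :: "nat \<Rightarrow> real"
  assumes rec: "\<And>k. d (Suc k) + \<alpha> k * c * g k \<le> a k * d k + b k"
    and a1: "\<And>k. a k \<ge> 1" and d0: "\<And>k. d k \<ge> 0" and g0: "\<And>k. g k \<ge> 0"
    and c: "c > 0" and ap: "\<And>k. \<alpha> k > 0" and am: "antimono \<alpha>"
    and Pb: "\<And>K. (\<Prod>j<K. a j) \<le> P"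
    and b0: "\<And>k. b k \<ge> 0"
    and bb: "\<And>k. b k \<le> \<beta>1 * (\<alpha> k)^2 + K2 * (\<alpha> k * (\<epsilon> k)^2)"
    and \<beta>1: "\<beta>1 \<ge> 0" and K2: "K2 \<ge> 0" and sa: "summable (\<lambda>k. (\<alpha> k)^2)"
    and K: "K \<ge> 1"
  shows "\<exists>k<K. g k \<le> (P * (d 0 + \<beta>1 * (\<Sum>j. (\<alpha> j)^2)) / c + 1) / (real K * \<alpha> K)
            + (P * K2 / c + 1) * ((1 / (real K * \<alpha> K)) * (\<Sum>k<K. \<alpha> k * (\<epsilon> k)^2))"
proof -
  define W where "W k = (\<Prod>j<k. a j)" for k
  define S2 where "S2 = (\<Sum>j. (\<alpha> j)^2)"
  define E where "E = (\<Sum>k<K. \<alpha> k * (\<epsilon> k)^2)"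
  have W1: "W k \<ge> 1" for k unfolding W_def using a1 by (intro prod_ge_1) auto
  have WP: "W k \<le> P" for k unfolding W_def by (rule Pb)
  have P1: "P \<ge> 1" using W1[of 0] WP[of 0] by simp
  have tel: "d K / W K + (\<Sum>k<K. \<alpha> k * c * g k / W (Suc k)) \<le> d 0 + (\<Sum>k<K. b k / W (Suc k))"
    unfolding W_def by (rule telescope[where d=d and \<alpha>=\<alpha> and c=c and g=g and a=a and b=b, OF rec a1 d0])
  have s1: "(\<Sum>k<K. \<alpha> k * c * g k / P) \<le> (\<Sum>k<K. \<alpha> k * c * g k / W (Suc k))"
  proof (intro sum_mono)
    fix k
    have "0 \<le> \<alpha> k * c * g k" using ap[of k] c g0[of k] by simp
    moreover have "0 < W (Suc k)" using W1[of "Suc k"] by simp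
    ultimately show "\<alpha> k * c * g k / P \<le> \<alpha> k * c * g k / W (Suc k)"
      using WP[of "Suc k"] by (intro divide_left_mono) auto
  qed
  have s2: "(\<Sum>k<K. b k / W (Suc k)) \<le> (\<Sum>k<K. b k)"
  proof (intro sum_mono)
    fix k show "b k / W (Suc k) \<le> b k" using b0[of k] W1[of "Suc k"] by (simp add: divide_le_eq mult_le_cancel_left1)
  qed
  have s3: "(\<Sum>k<K. b k) \<le> \<beta>1 * S2 + K2 * E"
  proof -
    have "(\<Sum>k<K. b k) \<le> (\<Sum>k<K. \<beta>1 * (\<alpha> k)^2 + K2 * (\<alpha> k * (\<epsilon> k)^2))" by (intro sum_mono bb)
    also have "\<dots> = \<beta>1 * (\<Sum>k<K. (\<alpha> k)^2) + K2 * E" unfolding E_def by (simp add: sum.distrib sum_distrib_left)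
    also have "\<dots> \<le> \<beta>1 * S2 + K2 * E"
      unfolding S2_def using \<beta>1 sa by (intro add_right_mono mult_left_mono sum_le_suminf) auto
    finally show ?thesis .
  qed
  have dK: "d K / W K \<ge> 0" using d0[of K] W1[of K] by simp
  have main: "(c / P) * (\<Sum>k<K. \<alpha> k * g k) \<le> d 0 + \<beta>1 * S2 + K2 * E"
  proof -
    have "(c / P) * (\<Sum>k<K. \<alpha> k * g k) = (\<Sum>k<K. \<alpha> k * c * g k / P)"
      by (simp add: sum_distrib_left sum_divide_distrib mult.commute mult.left_commute)
    then show ?thesis using tel s1 s2 s3 dK by linarith
  qed
  define gm where "gm = Min (g ` {..<K})"
  have ne: "{..<K} \<noteq> {}" using K by (metis lessThan_iff less_le_trans empty_iff zero_less_one of_nat_0 not_one_le_zero gr_zeroI)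
  have "gm \<in> g ` {..<K}" unfolding gm_def using ne by (intro Min_in) auto
  then obtain ks where ks: "ks < K" "g ks = gm" by auto
  have gmin: "gm \<le> g k" if "k < K" for k unfolding gm_def using that by (intro Min_le) auto
  have aK: "\<alpha> K \<le> \<alpha> k" if "k < K" for k using am that by (simp add: antimono_def)
  have lb: "real K * \<alpha> K * gm \<le> (\<Sum>k<K. \<alpha> k * g k)"
  proof -
    have "real K * \<alpha> K * gm = (\<Sum>k<K. \<alpha> K * gm)" by simp
    also have "\<dots> \<le> (\<Sum>k<K. \<alpha> k * g k)"
    proof (intro sum_mono)
      fix k assume "k \<in> {..<K}"
      then have "k < K" by simp
      moreover have "gm \<ge> 0" using ks g0 by metis
      ultimately show "\<alpha> K * gm \<le> \<alpha> k * g k" using aK gmin ap[of K] ap[of k] by (intro mult_mono) auto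
    qed
    finally show ?thesis .
  qed
  have Ka: "real K * \<alpha> K > 0" using K ap[of K] by simp
  have E0: "E \<ge> 0" unfolding E_def using ap by (intro sum_nonneg) (simp add: less_imp_le)
  have "gm \<le> (P / c) * (d 0 + \<beta>1 * S2 + K2 * E) / (real K * \<alpha> K)"
  proof -
    have "real K * \<alpha> K * gm \<le> (P / c) * (d 0 + \<beta>1 * S2 + K2 * E)"
    proof -
      have "(\<Sum>k<K. \<alpha> k * g k) \<le> (P / c) * (d 0 + \<beta>1 * S2 + K2 * E)"
        using main c P1 by (simp add: field_simps)
      then show ?thesis using lb by linarith
    qed
    then show ?thesis using Ka by (subst pos_le_divide_eq) (auto simp: mult.commute)
  qed
  also have "\<dots> = (P * (d 0 + \<beta>1 * S2) / c) / (real K * \<alpha> K) + (P * K2 / c) * ((1 / (real K * \<alpha> K)) * E)"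
    by (rule alg_eq) (use c Ka K in auto)
  also have "\<dots> \<le> (P * (d 0 + \<beta>1 * S2) / c + 1) / (real K * \<alpha> K) + (P * K2 / c + 1) * ((1 / (real K * \<alpha> K)) * E)"
  proof -
    have "0 \<le> (1 / (real K * \<alpha> K)) * E" using Ka E0 by simp
    then show ?thesis using Ka by (intro add_mono divide_right_mono mult_right_mono) auto
  qed
  finally show ?thesis using ks unfolding S2_def E_def by auto
qed

theorem mainTheorem3:
  fixes M :: "'w measure"
    and D :: "(real^'m::finite) measure"
    and F :: "'m \<Rightarrow> real^'d::finite \<Rightarrow> real"
    and G :: "'m \<Rightarrow> real^'d \<Rightarrow> real^'d"
    and e :: "real^'m \<Rightarrow> real^'d \<Rightarrow> real^'d"
    and V :: "nat \<Rightarrow> 'w \<Rightarrow> real^'m"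
    and \<theta> :: "nat \<Rightarrow> 'w \<Rightarrow> real^'d"
    and \<theta>0 :: "real^'d"
    and \<alpha> \<epsilon> :: "nat \<Rightarrow> real"
    and Lf finf A B C \<eta> \<zeta> \<rho> :: real
  assumes M_prob: "prob_space M"
    and D_prob: "prob_space D" and D_sets: "sets D = sets borel"
    and D_indep: "prob_space.indep_vars D (\<lambda>_. borel) (\<lambda>i v. v $ i) UNIV"
    and D_mean: "\<And>i. integral\<^sup>L D (\<lambda>v. v $ i) = 1"
    and D_sq: "\<And>i. integrable D (\<lambda>v. (v $ i)^2)"
    \<comment> \<open>sampling: v^k iid with law D, independent of each other\<close>
    and V_meas: "\<And>k. V k \<in> borel_measurable M"
    and V_law: "\<And>k. distr M borel (V k) = D"
    and V_indep: "prob_space.indep_vars M (\<lambda>_. borel) V UNIV"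
    \<comment> \<open>ISGD iteration\<close>
    and \<theta>_0: "\<And>\<omega>. \<theta> 0 \<omega> = \<theta>0"
    and \<theta>_Suc: "\<And>k \<omega>. \<theta> (Suc k) \<omega> =
        \<theta> k \<omega> - \<alpha> k *\<^sub>R (wavg (V k \<omega>) G (\<theta> k \<omega>) + e (V k \<omega>) (\<theta> k \<omega>))"
    and e_meas: "(\<lambda>p. e (fst p) (snd p)) \<in> borel_measurable borel"
    \<comment> \<open>(A1)\<close>
    and F_grad: "\<And>i x. GDERIV (F i) x :> G i x"
    and G_lip: "\<And>i. \<exists>L. \<forall>x y. norm (G i x - G i y) \<le> L * norm (x - y)"
    and F_bdd: "\<And>i. bdd_below (range (F i))"
    and f_lip: "\<And>x y. norm (wavg ones G x - wavg ones G y) \<le> Lf * norm (x - y)"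
    and f_lb: "\<And>x. finf \<le> wavg ones F x"
    and ABC_nonneg: "A \<ge> 0" "B \<ge> 0" "C \<ge> 0"
    and ABC: "\<And>x. integral\<^sup>L D (\<lambda>v. (norm (wavg v G x))^2)
               \<le> 2 * A * (wavg ones F x - finf) + B * (norm (wavg ones G x))^2 + C"
    \<comment> \<open>(A2)\<close>
    and eps_nonneg: "\<And>k. \<epsilon> k \<ge> 0"
    and A2: "\<And>k. AE \<omega> in M.
        nn_cond_exp M (vimage_algebra (space M) (\<theta> k) borel)
          (\<lambda>\<omega>. ennreal ((norm (e (V k \<omega>) (\<theta> k \<omega>)))^2)) \<omega> \<le> ennreal ((\<epsilon> k)^2)"
    \<comment> \<open>(A3)\<close>
    and alpha_pos: "\<And>k. \<alpha> k > 0"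
    and alpha_antimono: "antimono \<alpha>"
    and alpha_sq: "summable (\<lambda>k. (\<alpha> k)^2)"
    and alpha_lim: "(\<lambda>k. 1 / (real k * \<alpha> k)) \<longlonglongrightarrow> 0"
    \<comment> \<open>parameters\<close>
    and eta: "\<eta> > 0" and zeta: "\<zeta> > 1/2" and rho: "0 < \<rho>" "\<rho> < 1"
    and alpha0: "\<alpha> 0 * (\<zeta> * Lf * ((1 + \<eta>) / \<eta> * B)) \<le> \<rho> * (2 * \<zeta> - 1)"
  shows "(\<exists>C1 C2. C1 > 0 \<and> C2 > 0 \<and>
           (\<forall>K\<ge>1. Min ((\<lambda>k. \<integral>\<^sup>+\<omega>. ennreal ((norm (wavg ones G (\<theta> k \<omega>)))^2) \<partial>M) ` {..<K})
              \<le> ennreal (C1 / (real K * \<alpha> K)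
                  + C2 * ((1 / (real K * \<alpha> K)) * (\<Sum>k<K. \<alpha> k * (\<epsilon> k)^2)))))
       \<and> (((\<lambda>K. (1 / (real K * \<alpha> K)) * (\<Sum>k<K. \<alpha> k * (\<epsilon> k)^2)) \<longlonglongrightarrow> 0) \<longrightarrow>
           (\<lambda>K. Min ((\<lambda>k. \<integral>\<^sup>+\<omega>. ennreal (norm (wavg ones G (\<theta> k \<omega>))) \<partial>M) ` {..<K}))
             \<longlonglongrightarrow> 0)"
proof -
  interpret M: prob_space M by (rule M_prob)
  interpret D: prob_space D by (rule D_prob)
  define f where "f = wavg ones F"
  define gf where "gf = wavg ones G"
  define \<Delta> where "\<Delta> x = f x - finf" for x
  define st where "st k x v = x - \<alpha> k *\<^sub>R (wavg v G x + e v x)" for k x v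
  define At where "At = (1 + 1/\<eta>) * A"
  define Ct where "Ct = (1 + 1/\<eta>) * C"
  define c where "c = (1 - \<rho>) * (2*\<zeta> - 1) / (2*\<zeta>)"
  define \<kappa> where "\<kappa> k = \<alpha> k * \<zeta> / 2 + Lf * (\<alpha> k)^2 * (1 + \<eta>) / 2" for k
  define a where "a k = 1 + Lf * At * (\<alpha> k)^2" for k
  define b where "b k = Lf * (\<alpha> k)^2 * Ct / 2 + \<kappa> k * (\<epsilon> k)^2" for k
  have L0: "Lf \<ge> 0"
  proof (rule ccontr)
    assume neg: "\<not> Lf \<ge> 0"
    obtain i0 :: 'd where True by simp
    let ?u = "(\<chi> i. (1::real)) :: real^'d"
    have "?u $ i0 \<noteq> (0 :: real^'d) $ i0" by simp
    then have "?u \<noteq> 0" by metis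
    then have np: "norm (0 - ?u) > 0" by simp
    have "norm (gf 0 - gf ?u) \<le> Lf * norm (0 - ?u)" using f_lip[of 0 ?u] gf_def by simp
    moreover have "Lf * norm (0 - ?u) < 0" using neg np by (simp add: mult_neg_pos)
    ultimately show False using norm_ge_zero[of "gf 0 - gf ?u"] by linarith
  qed
  have Gc: "continuous_on UNIV (G i)" for i
  proof -
    obtain L where L: "\<forall>x y. norm (G i x - G i y) \<le> L * norm (x - y)" using G_lip by blast
    have "(max L 0)-lipschitz_on UNIV (G i)"
    proof (rule lipschitz_onI)
      fix x y show "dist (G i x) (G i y) \<le> max L 0 * dist x y"
        using L[rule_format, of x y] by (simp add: dist_norm) (meson max.cobounded1 mult_right_mono norm_ge_zero order_trans)
    qed simp
    then show ?thesis by (rule lipschitz_on_continuous_on)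
  qed
  have gfc: "continuous_on UNIV gf"
  proof -
    have "Lf-lipschitz_on UNIV gf"
      using f_lip L0 unfolding gf_def by (intro lipschitz_onI) (auto simp: dist_norm)
    then show ?thesis by (rule lipschitz_on_continuous_on)
  qed
  have fder: "(f has_derivative (\<lambda>h. h \<bullet> gf x)) (at x)" for x
    unfolding f_def gf_def by (rule wavg_ones_deriv[OF F_grad])
  have fc: "continuous_on UNIV f"
    using fder by (meson continuous_at_imp_continuous_on has_derivative_continuous)
  have wc: "continuous_on UNIV (\<lambda>p :: (real^'d) \<times> (real^'m). wavg (snd p) G (fst p))"
    unfolding wavg_def
    by (intro continuous_intros continuous_on_component continuous_on_compose2[OF Gc]) auto
  have Gm[measurable]: "G i \<in> borel_measurable borel" for i using Gc by (rule borel_measurable_continuous_onI)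
  have gfm[measurable]: "gf \<in> borel_measurable borel" using gfc by (rule borel_measurable_continuous_onI)
  have fm[measurable]: "f \<in> borel_measurable borel" using fc by (rule borel_measurable_continuous_onI)
  have wm: "(\<lambda>p :: (real^'d) \<times> (real^'m). wavg (snd p) G (fst p)) \<in> borel_measurable (borel \<Otimes>\<^sub>M borel)"
    unfolding borel_prod using wc by (rule borel_measurable_continuous_onI)
  have em: "(\<lambda>p :: (real^'d) \<times> (real^'m). e (snd p) (fst p)) \<in> borel_measurable (borel \<Otimes>\<^sub>M borel)"
  proof -
    have "(\<lambda>p :: (real^'d) \<times> (real^'m). (snd p, fst p)) \<in> measurable (borel \<Otimes>\<^sub>M borel) (borel \<Otimes>\<^sub>M borel)"
      by (intro measurable_Pair measurable_snd measurable_fst)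
    from measurable_comp[OF this e_meas[folded borel_prod]] show ?thesis by (simp add: comp_def)
  qed
  have stm: "(\<lambda>p. st k (fst p) (snd p)) \<in> borel_measurable (borel \<Otimes>\<^sub>M borel)" for k
    unfolding st_def using wm em by (intro borel_measurable_diff borel_measurable_scaleR borel_measurable_add measurable_fst) auto
  have stm': "(\<lambda>v. st k x v) \<in> borel_measurable borel" for k x
    using measurable_Pair2[OF stm, of x] by simp
  have wm': "(\<lambda>v. wavg v G x) \<in> borel_measurable borel" for x
    using measurable_Pair2[OF wm, of x] by simp
  have em': "(\<lambda>v. e v x) \<in> borel_measurable borel" for x
    using measurable_Pair2[OF em, of x] by simp
  have Dm: "measurable D = measurable borel" by (intro ext measurable_cong_sets[OF D_sets refl])
  have \<theta>m[measurable]: "\<theta> k \<in> borel_measurable M" for k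
  proof (induction k)
    case 0 then show ?case by (simp add: \<theta>_0)
  next
    case (Suc k)
    have p: "(\<lambda>\<omega>. (\<theta> k \<omega>, V k \<omega>)) \<in> measurable M (borel \<Otimes>\<^sub>M borel)" using Suc V_meas by (intro measurable_Pair)
    have "(\<lambda>\<omega>. st k (\<theta> k \<omega>) (V k \<omega>)) \<in> borel_measurable M"
      using measurable_comp[OF p stm[of k]] by (simp add: comp_def)
    moreover have "\<theta> (Suc k) = (\<lambda>\<omega>. st k (\<theta> k \<omega>) (V k \<omega>))" by (simp add: fun_eq_iff \<theta>_Suc st_def)
    ultimately show ?case by simp
  qed
  have \<theta>it: "\<theta> k \<omega> = iterw st \<theta>0 (\<lambda>j. V j \<omega>) k" for k \<omega>
    by (induction k) (simp_all add: \<theta>_0 \<theta>_Suc st_def)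
  have IND: "(\<integral>\<^sup>+\<omega>. \<phi> (\<theta> k \<omega>, V k \<omega>) \<partial>M) = (\<integral>\<^sup>+\<omega>. (\<integral>\<^sup>+v. \<phi> (\<theta> k \<omega>, v) \<partial>D) \<partial>M)"
    if phi: "\<phi> \<in> borel_measurable (borel \<Otimes>\<^sub>M borel)" for \<phi> k
  proof -
    let ?X = "\<lambda>\<omega>. restrict (\<lambda>i. V i \<omega>) {..<k}"
    let ?Y = "\<lambda>\<omega>. restrict (\<lambda>i. V i \<omega>) {k}"
    have ind: "M.indep_var (PiM {..<k} (\<lambda>_. borel)) ?X (PiM {k} (\<lambda>_. borel)) ?Y"
      using V_indep by (intro M.indep_var_restrict) auto
    have h1: "(\<lambda>w. iterw st \<theta>0 w k) \<in> borel_measurable (PiM {..<k} (\<lambda>_. borel))"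
      by (rule iterw_meas[OF stm]) simp
    have h2: "(\<lambda>w. w k) \<in> measurable (PiM {k} (\<lambda>_. borel)) borel"
      using measurable_component_singleton[of k "{k}" "\<lambda>_. borel"] by simp
    have e1: "iterw st \<theta>0 (?X \<omega>) k = \<theta> k \<omega>" for \<omega>
      unfolding \<theta>it by (rule iterw_cong) simp
    have e2: "?Y \<omega> k = V k \<omega>" for \<omega> by simp
    have law: "distr M borel (\<lambda>\<omega>. ?Y \<omega> k) = D" using V_law by simp
    note X1 = indep_nn[OF M_prob ind]
    note X2 = X1[OF h1]
    note X3 = X2[OF h2]
    note X4 = X3[OF law]
    note X5 = X4[OF phi]
    show ?thesis using X5 unfolding e1 e2 .
  qed
  have vm: "(\<lambda>v. v $ i) \<in> borel_measurable D" for i :: 'm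
    unfolding Dm by (intro borel_measurable_continuous_onI continuous_on_component continuous_on_id)
  have vsq: "integrable D (\<lambda>v. (v $ i)^2)" for i using D_sq .
  have vint: "integrable D (\<lambda>v. v $ i)" for i
  proof (rule Bochner_Integration.integrable_bound)
    show "integrable D (\<lambda>v. 1 + (v $ i)^2)" using vsq by (intro Bochner_Integration.integrable_add D.integrable_const)
    show "(\<lambda>v. v $ i) \<in> borel_measurable D" by (rule vm)
    show "AE v in D. norm (v $ i) \<le> norm (1 + (v $ i)^2)"
    proof (intro AE_I2)
      fix v :: "real^'m"
      have h1: "0 \<le> (\<bar>v $ i\<bar> - 1/2)^2" by simp
      have h2a: "(\<bar>v $ i\<bar> - 1/2)^2 = \<bar>v $ i\<bar>^2 - \<bar>v $ i\<bar> + 1/4"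
        by (simp add: power2_eq_square field_simps)
      have h2: "(\<bar>v $ i\<bar> - 1/2)^2 = (v $ i)^2 - \<bar>v $ i\<bar> + 1/4"
        unfolding h2a by simp
      have "\<bar>v $ i\<bar> \<le> 1 + (v $ i)^2" using h1 h2 by linarith
      then show "norm (v $ i) \<le> norm (1 + (v $ i)^2)" by simp
    qed
  qed
  have vvint: "integrable D (\<lambda>v. v $ i * v $ j)" for i j
  proof (rule Bochner_Integration.integrable_bound)
    show "integrable D (\<lambda>v. (v $ i)^2 + (v $ j)^2)" using vsq by (intro Bochner_Integration.integrable_add)
    show "(\<lambda>v. v $ i * v $ j) \<in> borel_measurable D" using vm by (intro borel_measurable_times)
    show "AE v in D. norm (v $ i * v $ j) \<le> norm ((v $ i)^2 + (v $ j)^2)"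
    proof (intro AE_I2)
      fix v :: "real^'m"
      have "\<bar>v $ i * v $ j\<bar> \<le> (v $ i)^2 + (v $ j)^2"
      proof -
        have h1: "0 \<le> (\<bar>v $ i\<bar> - \<bar>v $ j\<bar>)^2" by simp
        have h2: "(\<bar>v $ i\<bar> - \<bar>v $ j\<bar>)^2 = (v $ i)^2 - 2 * \<bar>v $ i * v $ j\<bar> + (v $ j)^2"
          by (simp add: power2_diff power2_abs abs_mult)
        show ?thesis using h1 h2 by simp
      qed
      then show "norm (v $ i * v $ j) \<le> norm ((v $ i)^2 + (v $ j)^2)" by simp
    qed
  qed
  have lin_eq: "y \<bullet> wavg v G x = (\<Sum>i\<in>UNIV. v $ i * ((y \<bullet> G i x) / real CARD('m)))" for y x and v :: "real^'m"
    unfolding wavg_def by (simp add: inner_sum_right sum_divide_distrib)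
  have lin_int: "integrable D (\<lambda>v. y \<bullet> wavg v G x)" for y x
    unfolding lin_eq using vint by (intro Bochner_Integration.integrable_sum Bochner_Integration.integrable_mult_left)
  have lin_val: "integral\<^sup>L D (\<lambda>v. y \<bullet> wavg v G x) = y \<bullet> gf x" for y x
  proof -
    have "integral\<^sup>L D (\<lambda>v. y \<bullet> wavg v G x) = (\<Sum>i\<in>UNIV. integral\<^sup>L D (\<lambda>v. v $ i) * ((y \<bullet> G i x) / real CARD('m)))"
      unfolding lin_eq using vint by (subst Bochner_Integration.integral_sum) auto
    also have "\<dots> = y \<bullet> gf x" unfolding D_mean gf_def lin_eq by (simp add: ones_def)
    finally show ?thesis .
  qed
  have sq_eq: "(norm (wavg v G x))^2 = (\<Sum>i\<in>UNIV. \<Sum>j\<in>UNIV. v $ i * v $ j * ((G j x \<bullet> G i x) / (real CARD('m))^2))" for x and v :: "real^'m"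
    unfolding power2_norm_eq_inner wavg_def
    by (simp add: inner_sum_left inner_sum_right sum_divide_distrib sum_distrib_left power2_eq_square algebra_simps)
  have sq_int: "integrable D (\<lambda>v. (norm (wavg v G x))^2)" for x
    unfolding sq_eq using vvint by (intro Bochner_Integration.integrable_sum Bochner_Integration.integrable_mult_left)
  have alpha_le0: "\<alpha> k \<le> \<alpha> 0" for k using alpha_antimono by (simp add: antimono_def)
  have zeta0: "\<zeta> > 0" using zeta by simp
  have Bt_bound: "\<alpha> k * \<zeta> * Lf * ((1 + 1/\<eta>) * B) \<le> \<rho> * (2 * \<zeta> - 1)" for k
  proof -
    have e: "(1 + \<eta>) / \<eta> * B = (1 + 1/\<eta>) * B" using eta by (simp add: field_simps)
    have "\<alpha> k * (\<zeta> * Lf * ((1 + 1/\<eta>) * B)) \<le> \<alpha> 0 * (\<zeta> * Lf * ((1 + 1/\<eta>) * B))"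
      using alpha_le0[of k] zeta0 L0 ABC_nonneg eta by (intro mult_right_mono) auto
    then show ?thesis using alpha0 unfolding e by (simp add: mult.assoc)
  qed
  have Delta0: "\<Delta> x \<ge> 0" for x using f_lb[of x] unfolding \<Delta>_def f_def by simp
  have PD: "(\<integral>\<^sup>+v. ennreal (\<Delta> (st k x v)) \<partial>D) + ennreal (\<alpha> k * c * (norm (gf x))^2)
      \<le> ennreal (a k * \<Delta> x + Lf * (\<alpha> k)^2 * Ct / 2) + ennreal (\<kappa> k) * (\<integral>\<^sup>+v. ennreal ((norm (e v x))^2) \<partial>D)" for k x
  proof -
    define g where "g = (norm (gf x))^2"
    define P where "P v = \<Delta> x - \<alpha> k * (gf x \<bullet> wavg v G x) + \<alpha> k * g / (2*\<zeta>) + Lf * (\<alpha> k)^2 * (1 + 1/\<eta>) / 2 * (norm (wavg v G x))^2" for v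
    define Q where "Q v = \<kappa> k * (norm (e v x))^2" for v
    have ak: "\<alpha> k > 0" by (rule alpha_pos)
    have kap0: "\<kappa> k \<ge> 0" unfolding \<kappa>_def using ak zeta0 L0 eta by (intro add_nonneg_nonneg) auto
    have c0: "c \<ge> 0" unfolding c_def using rho zeta by (auto intro!: divide_nonneg_pos mult_nonneg_nonneg)
    have le: "\<Delta> (st k x v) \<le> P v + Q v" for v
    proof -
      have desc: "f (x - \<alpha> k *\<^sub>R (wavg v G x + e v x)) \<le> f x + gf x \<bullet> (- (\<alpha> k *\<^sub>R (wavg v G x + e v x))) + Lf / 2 * (norm (- (\<alpha> k *\<^sub>R (wavg v G x + e v x))))^2"
        using descent[OF fder f_lip[folded gf_def], of "x - \<alpha> k *\<^sub>R (wavg v G x + e v x)" x] by simp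
      from step_ineq[OF desc L0 ak zeta0 eta, of finf]
      show ?thesis unfolding \<Delta>_def st_def P_def Q_def \<kappa>_def g_def by simp
    qed
    have Pint: "integrable D P" unfolding P_def using lin_int sq_int
      by (intro Bochner_Integration.integrable_add Bochner_Integration.integrable_diff Bochner_Integration.integrable_mult_right D.integrable_const) auto
    have Qm: "Q \<in> borel_measurable D" unfolding Q_def Dm using em' by measurable
    have intP: "integral\<^sup>L D P = \<Delta> x - \<alpha> k * g + \<alpha> k * g / (2*\<zeta>) + Lf * (\<alpha> k)^2 * (1 + 1/\<eta>) / 2 * integral\<^sup>L D (\<lambda>v. (norm (wavg v G x))^2)"
    proof -
      have "integral\<^sup>L D P = integral\<^sup>L D (\<lambda>v. \<Delta> x + \<alpha> k * g / (2*\<zeta>)) - integral\<^sup>L D (\<lambda>v. \<alpha> k * (gf x \<bullet> wavg v G x)) + integral\<^sup>L D (\<lambda>v. Lf * (\<alpha> k)^2 * (1 + 1/\<eta>) / 2 * (norm (wavg v G x))^2)"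
        unfolding P_def using lin_int sq_int
        by (subst Bochner_Integration.integral_add Bochner_Integration.integral_diff, (auto intro!: Bochner_Integration.integrable_diff)[2])+
           (simp add: algebra_simps)
      also have "\<dots> = \<Delta> x + \<alpha> k * g / (2*\<zeta>) - \<alpha> k * g + Lf * (\<alpha> k)^2 * (1 + 1/\<eta>) / 2 * integral\<^sup>L D (\<lambda>v. (norm (wavg v G x))^2)"
        using lin_val[of "gf x" x] by (simp add: g_def power2_norm_eq_inner D.prob_space)
      finally show ?thesis by simp
    qed
    have Pb: "integral\<^sup>L D P \<le> a k * \<Delta> x + Lf * (\<alpha> k)^2 * Ct / 2 - \<alpha> k * c * g"
    proof -
      define K where "K = Lf * (\<alpha> k)^2 * (1 + 1/\<eta>) / 2"
      have K0: "K \<ge> 0" unfolding K_def using L0 eta by auto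
      have abc: "integral\<^sup>L D (\<lambda>v. (norm (wavg v G x))^2) \<le> 2 * A * \<Delta> x + B * g + C"
        using ABC[of x] unfolding \<Delta>_def f_def g_def gf_def by simp
      have m1: "K * integral\<^sup>L D (\<lambda>v. (norm (wavg v G x))^2) \<le> K * (2 * A * \<Delta> x) + K * B * g + K * C"
        using mult_left_mono[OF abc K0] by (simp add: algebra_simps)
      have m2: "K * (2 * A * \<Delta> x) = Lf * At * (\<alpha> k)^2 * \<Delta> x" unfolding K_def At_def by simp
      have m3: "K * C = Lf * (\<alpha> k)^2 * Ct / 2" unfolding K_def Ct_def by simp
      have m5: "a k * \<Delta> x = \<Delta> x + Lf * At * (\<alpha> k)^2 * \<Delta> x" unfolding a_def by (simp add: algebra_simps)
      have m4: "- \<alpha> k * g + \<alpha> k * g / (2*\<zeta>) + K * B * g \<le> - \<alpha> k * c * g"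
      proof -
        have g0: "g \<ge> 0" unfolding g_def by simp
        have "K * B = \<alpha> k * (\<alpha> k * \<zeta> * Lf * ((1 + 1/\<eta>) * B)) / (2 * \<zeta>)"
          unfolding K_def using zeta0 by (simp add: field_simps power2_eq_square)
        also have "\<dots> \<le> \<alpha> k * (\<rho> * (2 * \<zeta> - 1)) / (2 * \<zeta>)"
          using Bt_bound[of k] ak zeta0 by (intro divide_right_mono mult_left_mono) auto
        finally have KB: "K * B \<le> \<alpha> k * (\<rho> * (2 * \<zeta> - 1)) / (2 * \<zeta>)" .
        have "- \<alpha> k + \<alpha> k / (2*\<zeta>) + \<alpha> k * (\<rho> * (2 * \<zeta> - 1)) / (2 * \<zeta>) = - \<alpha> k * c"
          unfolding c_def using zeta0 by (simp add: field_simps)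
        then have "- \<alpha> k + \<alpha> k / (2*\<zeta>) + K * B \<le> - \<alpha> k * c" using KB by linarith
        from mult_right_mono[OF this g0] show ?thesis by (simp add: algebra_simps)
      qed
      show ?thesis unfolding intP m5 K_def[symmetric] using m1 m2 m3 m4 by linarith
    qed
    have g0: "\<alpha> k * c * g \<ge> 0" unfolding g_def using ak c0 by simp
    have main: "(\<integral>\<^sup>+v. ennreal (\<Delta> (st k x v)) \<partial>D) + ennreal (\<alpha> k * c * g) \<le> ennreal ((a k * \<Delta> x + Lf * (\<alpha> k)^2 * Ct / 2 - \<alpha> k * c * g) + \<alpha> k * c * g) + (\<integral>\<^sup>+v. ennreal (Q v) \<partial>D)"
      by (rule nn_split[OF le Delta0 _ Pint Qm Pb g0]) (simp add: Q_def kap0)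
    have "(\<integral>\<^sup>+v. ennreal (Q v) \<partial>D) = ennreal (\<kappa> k) * (\<integral>\<^sup>+v. ennreal ((norm (e v x))^2) \<partial>D)"
      unfolding Q_def using kap0 em' by (subst nn_integral_cmult[symmetric]) (auto simp: ennreal_mult Dm)
    then show ?thesis using main unfolding g_def by simp
  qed
  have Eerr: "(\<integral>\<^sup>+\<omega>. ennreal ((norm (e (V k \<omega>) (\<theta> k \<omega>)))^2) \<partial>M) \<le> ennreal ((\<epsilon> k)^2)" for k
  proof -
    let ?F = "vimage_algebra (space M) (\<theta> k) borel"
    have sub: "subalgebra M ?F" unfolding subalgebra_def
      using sets_image_in_sets[OF refl \<theta>m[of k]] by simp
    interpret S: finite_measure_subalgebra M ?F
      by unfold_locales (rule sub)
    have gm: "(\<lambda>\<omega>. ennreal ((norm (e (V k \<omega>) (\<theta> k \<omega>)))^2)) \<in> borel_measurable M"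
    proof -
      have p: "(\<lambda>\<omega>. (\<theta> k \<omega>, V k \<omega>)) \<in> measurable M (borel \<Otimes>\<^sub>M borel)" using V_meas by (intro measurable_Pair) auto
      have "(\<lambda>\<omega>. e (snd (\<theta> k \<omega>, V k \<omega>)) (fst (\<theta> k \<omega>, V k \<omega>))) \<in> borel_measurable M"
        using measurable_comp[OF p em] by (simp add: comp_def)
      then show ?thesis by simp
    qed
    have "(\<integral>\<^sup>+\<omega>. ennreal ((norm (e (V k \<omega>) (\<theta> k \<omega>)))^2) \<partial>M)
        = (\<integral>\<^sup>+\<omega>. 1 * nn_cond_exp M ?F (\<lambda>\<omega>. ennreal ((norm (e (V k \<omega>) (\<theta> k \<omega>)))^2)) \<omega> \<partial>M)"
      using S.nn_cond_exp_intg[of "\<lambda>_. 1", OF _ gm] by simp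
    also have "\<dots> \<le> (\<integral>\<^sup>+\<omega>. ennreal ((\<epsilon> k)^2) \<partial>M)"
      using A2[of k] by (intro nn_integral_mono_AE) auto
    also have "\<dots> = ennreal ((\<epsilon> k)^2)" by (simp add: M.emeasure_space_1)
    finally show ?thesis .
  qed
  have psim: "(\<lambda>x. \<integral>\<^sup>+v. \<phi> (x, v) \<partial>D) \<in> borel_measurable borel"
    if phi: "\<phi> \<in> borel_measurable (borel \<Otimes>\<^sub>M borel)" for \<phi> :: "(real^'d) \<times> (real^'m) \<Rightarrow> ennreal"
  proof -
    have sf: "sigma_finite_measure D" by (simp add: D.prob_space_axioms prob_space_imp_sigma_finite)
    have "sets (borel \<Otimes>\<^sub>M D) = sets (borel \<Otimes>\<^sub>M (borel :: (real^'m) measure))" using D_sets by (intro sets_pair_measure_cong) simp_all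
    then have "\<phi> \<in> borel_measurable (borel \<Otimes>\<^sub>M D)" by (subst measurable_cong_sets[OF _ refl]) (assumption, rule phi)
    then show ?thesis by (rule sigma_finite_measure.borel_measurable_nn_integral_fst[OF sf])
  qed
  define dE where "dE k = (\<integral>\<^sup>+\<omega>. ennreal (\<Delta> (\<theta> k \<omega>)) \<partial>M)" for k
  define gE where "gE k = (\<integral>\<^sup>+\<omega>. ennreal ((norm (gf (\<theta> k \<omega>)))^2) \<partial>M)" for k
  have Deltam[measurable]: "\<Delta> \<in> borel_measurable borel" unfolding \<Delta>_def[abs_def] by measurable
  have REC: "dE (Suc k) + ennreal (\<alpha> k * c) * gE k \<le> ennreal (a k) * dE k + ennreal (b k)" for k
  proof -
    define \<Phi> where "\<Phi> x = (\<integral>\<^sup>+v. ennreal (\<Delta> (st k x v)) \<partial>D)" for x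
    define Ee where "Ee x = (\<integral>\<^sup>+v. ennreal ((norm (e v x))^2) \<partial>D)" for x
    have ak: "\<alpha> k > 0" by (rule alpha_pos)
    have c0: "c \<ge> 0" unfolding c_def using rho zeta by (auto intro!: divide_nonneg_pos mult_nonneg_nonneg)
    have kap0: "\<kappa> k \<ge> 0" unfolding \<kappa>_def using ak zeta L0 eta by (intro add_nonneg_nonneg) auto
    have a0: "a k \<ge> 0" unfolding a_def At_def using L0 eta ABC_nonneg by auto
    have Ct0: "Lf * (\<alpha> k)^2 * Ct / 2 \<ge> 0" unfolding Ct_def using L0 eta ABC_nonneg by auto
    have phi1: "(\<lambda>p. ennreal (\<Delta> (st k (fst p) (snd p)))) \<in> borel_measurable (borel \<Otimes>\<^sub>M borel)"
      using stm[of k] by measurable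
    have phi2: "(\<lambda>p :: (real^'d) \<times> (real^'m). ennreal ((norm (e (snd p) (fst p)))^2)) \<in> borel_measurable (borel \<Otimes>\<^sub>M borel)"
      using em by measurable
    have \<Phi>m[measurable]: "\<Phi> \<in> borel_measurable borel" unfolding \<Phi>_def using psim[OF phi1] by simp
    have Eem[measurable]: "Ee \<in> borel_measurable borel" unfolding Ee_def using psim[OF phi2] by simp
    have d1: "dE (Suc k) = (\<integral>\<^sup>+\<omega>. \<Phi> (\<theta> k \<omega>) \<partial>M)"
    proof -
      have "dE (Suc k) = (\<integral>\<^sup>+\<omega>. ennreal (\<Delta> (st k (fst (\<theta> k \<omega>, V k \<omega>)) (snd (\<theta> k \<omega>, V k \<omega>)))) \<partial>M)"
        unfolding dE_def by (simp add: \<theta>_Suc st_def)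
      also have "\<dots> = (\<integral>\<^sup>+\<omega>. \<Phi> (\<theta> k \<omega>) \<partial>M)"
        using IND[OF phi1, of k] unfolding \<Phi>_def by simp
      finally show ?thesis .
    qed
    have e1: "(\<integral>\<^sup>+\<omega>. Ee (\<theta> k \<omega>) \<partial>M) \<le> ennreal ((\<epsilon> k)^2)"
      using IND[OF phi2, of k] Eerr[of k] unfolding Ee_def by simp
    have "dE (Suc k) + ennreal (\<alpha> k * c) * gE k
        = (\<integral>\<^sup>+\<omega>. \<Phi> (\<theta> k \<omega>) + ennreal (\<alpha> k * c * (norm (gf (\<theta> k \<omega>)))^2) \<partial>M)"
      unfolding d1 gE_def using ak c0
      by (subst nn_integral_add) (auto simp: nn_integral_cmult[symmetric] ennreal_mult)
    also have "\<dots> \<le> (\<integral>\<^sup>+\<omega>. ennreal (a k * \<Delta> (\<theta> k \<omega>) + Lf * (\<alpha> k)^2 * Ct / 2) + ennreal (\<kappa> k) * Ee (\<theta> k \<omega>) \<partial>M)"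
      using PD unfolding \<Phi>_def Ee_def by (intro nn_integral_mono) auto
    also have "\<dots> = ennreal (a k) * dE k + ennreal (Lf * (\<alpha> k)^2 * Ct / 2) + ennreal (\<kappa> k) * (\<integral>\<^sup>+\<omega>. Ee (\<theta> k \<omega>) \<partial>M)"
    proof -
      have "(\<integral>\<^sup>+\<omega>. ennreal (a k * \<Delta> (\<theta> k \<omega>) + Lf * (\<alpha> k)^2 * Ct / 2) \<partial>M)
          = (\<integral>\<^sup>+\<omega>. ennreal (a k) * ennreal (\<Delta> (\<theta> k \<omega>)) + ennreal (Lf * (\<alpha> k)^2 * Ct / 2) \<partial>M)"
        using a0 Ct0 Delta0 by (intro nn_integral_cong) (simp add: ennreal_plus ennreal_mult)
      also have "\<dots> = ennreal (a k) * dE k + ennreal (Lf * (\<alpha> k)^2 * Ct / 2)"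
        unfolding dE_def by (subst nn_integral_add) (auto simp: nn_integral_cmult M.emeasure_space_1)
      finally have i1: "(\<integral>\<^sup>+\<omega>. ennreal (a k * \<Delta> (\<theta> k \<omega>) + Lf * (\<alpha> k)^2 * Ct / 2) \<partial>M) = ennreal (a k) * dE k + ennreal (Lf * (\<alpha> k)^2 * Ct / 2)" .
      show ?thesis
        by (subst nn_integral_add) (auto simp: i1 nn_integral_cmult)
    qed
    also have "\<dots> \<le> ennreal (a k) * dE k + ennreal (Lf * (\<alpha> k)^2 * Ct / 2) + ennreal (\<kappa> k) * ennreal ((\<epsilon> k)^2)"
      using e1 by (intro add_left_mono mult_left_mono) auto
    also have "\<dots> = ennreal (a k) * dE k + ennreal (b k)"
      unfolding b_def using kap0 Ct0 by (simp add: ennreal_plus ennreal_mult add.assoc)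
    finally show ?thesis .
  qed
  have c_pos: "c > 0" unfolding c_def using rho zeta by (auto intro!: divide_pos_pos mult_pos_pos)
  have a1: "a k \<ge> 1" for k unfolding a_def At_def using L0 eta ABC_nonneg by auto
  have kap0: "\<kappa> k \<ge> 0" for k unfolding \<kappa>_def using alpha_pos[of k] zeta L0 eta by (intro add_nonneg_nonneg) auto
  have Ct0: "Ct \<ge> 0" unfolding Ct_def using eta ABC_nonneg by auto
  have b0: "b k \<ge> 0" for k unfolding b_def using L0 Ct0 kap0[of k] by auto
  have dfin: "dE k < \<infinity>" for k
  proof (induction k)
    case 0
    have "dE 0 = ennreal (\<Delta> \<theta>0)" unfolding dE_def by (simp add: \<theta>_0 M.emeasure_space_1)
    then show ?case by simp
  next
    case (Suc k)
    have "dE (Suc k) \<le> ennreal (a k) * dE k + ennreal (b k)" using REC[of k] by (rule order_trans[rotated]) simp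
    also have "\<dots> < \<infinity>" using Suc by (simp add: ennreal_mult_less_top)
    finally show ?case .
  qed
  have gfin: "gE k < \<infinity>" for k
  proof -
    have "ennreal (\<alpha> k * c) * gE k \<le> ennreal (a k) * dE k + ennreal (b k)" using REC[of k] by (rule order_trans[rotated]) simp
    also have "\<dots> < \<infinity>" using dfin[of k] by (simp add: ennreal_mult_less_top)
    finally have h1: "ennreal (\<alpha> k * c) * gE k < \<infinity>" .
    have h2: "\<alpha> k * c > 0" using alpha_pos[of k] c_pos by simp
    show ?thesis
    proof (rule ccontr)
      assume h3: "\<not> gE k < \<infinity>"
      note h = h1 h2 h3
      have "gE k = \<infinity>" using h3 by (cases "gE k" rule: ennreal_cases) auto
      moreover have "ennreal (\<alpha> k * c) \<noteq> 0" using h2 by (metis ennreal_eq_0_iff not_le)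
      ultimately have "ennreal (\<alpha> k * c) * gE k = \<infinity>" by (simp add: ennreal_mult_top)
      then show False using h(1) by simp
    qed
  qed
  define d where "d k = enn2real (dE k)" for k
  define g where "g k = enn2real (gE k)" for k
  have dE_eq: "dE k = ennreal (d k)" for k unfolding d_def using dfin[of k] by (simp add: less_top)
  have gE_eq: "gE k = ennreal (g k)" for k unfolding g_def using gfin[of k] by (simp add: less_top)
  have d0: "d k \<ge> 0" for k unfolding d_def by simp
  have g0: "g k \<ge> 0" for k unfolding g_def by simp
  have rrec: "d (Suc k) + \<alpha> k * c * g k \<le> a k * d k + b k" for k
  proof -
    have ak: "\<alpha> k * c \<ge> 0" using alpha_pos[of k] c_pos by simp
    have "ennreal (d (Suc k) + \<alpha> k * c * g k) \<le> ennreal (a k * d k + b k)"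
    proof -
      have e1: "ennreal (\<alpha> k * c) * ennreal (g k) = ennreal (\<alpha> k * c * g k)" using ak g0[of k] by (rule ennreal_mult[symmetric])
      have e2: "ennreal (a k) * ennreal (d k) = ennreal (a k * d k)" using a1[of k] d0[of k] by (intro ennreal_mult[symmetric]) auto
      have e3: "ennreal (d (Suc k)) + ennreal (\<alpha> k * c * g k) = ennreal (d (Suc k) + \<alpha> k * c * g k)"
        using d0[of "Suc k"] ak g0[of k] by (intro ennreal_plus[symmetric]) auto
      have e4: "ennreal (a k * d k) + ennreal (b k) = ennreal (a k * d k + b k)"
        using a1[of k] d0[of k] b0[of k] by (intro ennreal_plus[symmetric]) auto
      show ?thesis using REC[of k] unfolding dE_eq gE_eq e1 e2 e3 e4 .
    qed
    then show ?thesis using a1[of k] d0[of k] b0[of k] by (subst (asm) ennreal_le_iff) auto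
  qed
  define S2 where "S2 = (\<Sum>j. (\<alpha> j)^2)"
  define P where "P = exp (Lf * At * S2)"
  define K2 where "K2 = \<zeta> / 2 + Lf * \<alpha> 0 * (1 + \<eta>) / 2"
  define \<beta>1 where "\<beta>1 = Lf * Ct / 2"
  have At0: "At \<ge> 0" unfolding At_def using eta ABC_nonneg by auto
  have S20: "S2 \<ge> 0" unfolding S2_def using alpha_sq by (intro suminf_nonneg) auto
  have Pb: "(\<Prod>j<K. a j) \<le> P" for K
  proof -
    have "(\<Prod>j<K. a j) \<le> exp (\<Sum>j<K. Lf * At * (\<alpha> j)^2)"
      unfolding a_def using L0 At0 by (intro prod_le_exp) auto
    also have "\<dots> \<le> P" unfolding P_def S2_def
    proof (subst exp_le_cancel_iff)
      have "(\<Sum>j<K. Lf * At * (\<alpha> j)^2) = Lf * At * (\<Sum>j<K. (\<alpha> j)^2)" by (simp add: sum_distrib_left)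
      also have "\<dots> \<le> Lf * At * (\<Sum>j. (\<alpha> j)^2)"
        using L0 At0 alpha_sq by (intro mult_left_mono sum_le_suminf) auto
      finally show "(\<Sum>j<K. Lf * At * (\<alpha> j)^2) \<le> Lf * At * (\<Sum>j. (\<alpha> j)^2)" .
    qed
    finally show ?thesis .
  qed
  have bb: "b k \<le> \<beta>1 * (\<alpha> k)^2 + K2 * (\<alpha> k * (\<epsilon> k)^2)" for k
  proof -
    have "\<kappa> k \<le> \<alpha> k * K2"
    proof -
      have "Lf * (\<alpha> k)^2 * (1 + \<eta>) / 2 \<le> Lf * (\<alpha> k * \<alpha> 0) * (1 + \<eta>) / 2"
        using L0 eta alpha_le0[of k] alpha_pos[of k]
        by (intro divide_right_mono mult_right_mono mult_left_mono) (auto simp: power2_eq_square)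
      then show ?thesis unfolding \<kappa>_def K2_def by (simp add: algebra_simps)
    qed
    then have "\<kappa> k * (\<epsilon> k)^2 \<le> \<alpha> k * K2 * (\<epsilon> k)^2" by (intro mult_right_mono) auto
    moreover have "Lf * (\<alpha> k)^2 * Ct / 2 = Lf * Ct / 2 * (\<alpha> k)^2" by simp
    moreover have "\<alpha> k * K2 * (\<epsilon> k)^2 = K2 * (\<alpha> k * (\<epsilon> k)^2)" by simp
    ultimately show ?thesis unfolding b_def \<beta>1_def by linarith
  qed
  have \<beta>10: "\<beta>1 \<ge> 0" unfolding \<beta>1_def using L0 Ct0 by simp
  have K20: "K2 \<ge> 0" unfolding K2_def using zeta L0 eta alpha_pos[of 0] by (intro add_nonneg_nonneg) auto
  define C1 where "C1 = P * (d 0 + \<beta>1 * S2) / c + 1"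
  define C2 where "C2 = P * K2 / c + 1"
  have P0: "P > 0" unfolding P_def by simp
  have C1p: "C1 > 0" unfolding C1_def using P0 d0[of 0] \<beta>10 S20 c_pos by (intro add_nonneg_pos divide_nonneg_pos) auto
  have C2p: "C2 > 0" unfolding C2_def using P0 K20 c_pos by (intro add_nonneg_pos divide_nonneg_pos) auto
  define r where "r K = C1 / (real K * \<alpha> K) + C2 * ((1 / (real K * \<alpha> K)) * (\<Sum>k<K. \<alpha> k * (\<epsilon> k)^2))" for K
  have key: "\<exists>k<K. g k \<le> r K" if K: "K \<ge> 1" for K
    unfolding r_def C1_def C2_def S2_def
    by (rule final_real[OF rrec a1 d0 g0 c_pos alpha_pos alpha_antimono Pb b0 bb \<beta>10 K20 alpha_sq K])
  have gE_def': "gE k = (\<integral>\<^sup>+\<omega>. ennreal ((norm (wavg ones G (\<theta> k \<omega>)))^2) \<partial>M)" for k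
    unfolding gE_def gf_def ..
  have part1: "\<forall>K\<ge>1. Min ((\<lambda>k. \<integral>\<^sup>+\<omega>. ennreal ((norm (wavg ones G (\<theta> k \<omega>)))^2) \<partial>M) ` {..<K}) \<le> ennreal (r K)"
  proof (intro allI impI)
    fix K :: nat assume K: "K \<ge> 1"
    obtain k where k: "k < K" "g k \<le> r K" using key[OF K] by blast
    have "Min ((\<lambda>k. \<integral>\<^sup>+\<omega>. ennreal ((norm (wavg ones G (\<theta> k \<omega>)))^2) \<partial>M) ` {..<K}) \<le> gE k"
      unfolding gE_def' using k by (intro Min_le) auto
    also have "\<dots> \<le> ennreal (r K)" unfolding gE_eq using k by (intro ennreal_leI) auto
    finally show "Min ((\<lambda>k. \<integral>\<^sup>+\<omega>. ennreal ((norm (wavg ones G (\<theta> k \<omega>)))^2) \<partial>M) ` {..<K}) \<le> ennreal (r K)" .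
  qed
  have rpos: "r K > 0" if "K \<ge> 1" for K
  proof -
    have Ka: "real K * \<alpha> K > 0" using that alpha_pos[of K] by simp
    have "(\<Sum>k<K. \<alpha> k * (\<epsilon> k)^2) \<ge> 0" using alpha_pos by (intro sum_nonneg) (simp add: less_imp_le)
    then have "C2 * ((1 / (real K * \<alpha> K)) * (\<Sum>k<K. \<alpha> k * (\<epsilon> k)^2)) \<ge> 0" using C2p Ka by simp
    moreover have "C1 / (real K * \<alpha> K) > 0" using C1p Ka by simp
    ultimately show ?thesis unfolding r_def by linarith
  qed
  have part2: "Min ((\<lambda>k. \<integral>\<^sup>+\<omega>. ennreal (norm (wavg ones G (\<theta> k \<omega>))) \<partial>M) ` {..<K}) \<le> ennreal (sqrt (r K))"
    if K: "K \<ge> 1" for K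
  proof -
    obtain k where k: "k < K" "g k \<le> r K" using key[OF K] by blast
    define sr where "sr = sqrt (r K)"
    have s0: "sr > 0" unfolding sr_def using rpos[OF K] by simp
    have ss: "sr * sr = r K" unfolding sr_def using rpos[OF K] by simp
    have pw: "y \<le> y^2 / (2 * sr) + sr / 2" for y :: real
    proof -
      have "0 \<le> (y - sr)^2 / (2 * sr)" using s0 by simp
      also have "(y - sr)^2 / (2 * sr) = y^2 / (2 * sr) + sr / 2 - y" using s0 by (simp add: field_simps power2_eq_square)
      finally show ?thesis by simp
    qed
    have "(\<integral>\<^sup>+\<omega>. ennreal (norm (wavg ones G (\<theta> k \<omega>))) \<partial>M)
        \<le> (\<integral>\<^sup>+\<omega>. ennreal (1 / (2 * sr)) * ennreal ((norm (gf (\<theta> k \<omega>)))^2) + ennreal (sr / 2) \<partial>M)"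
    proof (intro nn_integral_mono)
      fix \<omega>
      have "ennreal (norm (wavg ones G (\<theta> k \<omega>))) \<le> ennreal ((norm (gf (\<theta> k \<omega>)))^2 / (2 * sr) + sr / 2)"
        using pw unfolding gf_def by (intro ennreal_leI) auto
      also have "\<dots> = ennreal (1 / (2 * sr)) * ennreal ((norm (gf (\<theta> k \<omega>)))^2) + ennreal (sr / 2)"
        using s0 by (intro enn_aux) auto
      finally show "ennreal (norm (wavg ones G (\<theta> k \<omega>))) \<le> ennreal (1 / (2 * sr)) * ennreal ((norm (gf (\<theta> k \<omega>)))^2) + ennreal (sr / 2)" .
    qed
    also have "\<dots> = ennreal (1 / (2 * sr)) * gE k + ennreal (sr / 2)"
      unfolding gE_def by (subst nn_integral_add) (auto simp: nn_integral_cmult M.emeasure_space_1)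
    also have "\<dots> \<le> ennreal (1 / (2 * sr)) * ennreal (r K) + ennreal (sr / 2)"
      unfolding gE_eq using k by (intro add_right_mono mult_left_mono ennreal_leI) auto
    also have "\<dots> = ennreal (r K / (2 * sr) + sr / 2)"
      using s0 rpos[OF K] by (intro enn_aux[symmetric]) auto
    also have "r K / (2 * sr) + sr / 2 = sr" using s0 ss by (simp add: field_simps)
    finally have hk: "(\<integral>\<^sup>+\<omega>. ennreal (norm (wavg ones G (\<theta> k \<omega>))) \<partial>M) \<le> ennreal (sqrt (r K))" unfolding sr_def .
    have "Min ((\<lambda>k. \<integral>\<^sup>+\<omega>. ennreal (norm (wavg ones G (\<theta> k \<omega>))) \<partial>M) ` {..<K}) \<le> (\<integral>\<^sup>+\<omega>. ennreal (norm (wavg ones G (\<theta> k \<omega>))) \<partial>M)"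
      using k by (intro Min_le) auto
    then show ?thesis using hk by (rule order_trans)
  qed
  show ?thesis
  proof (intro conjI impI)
    show "\<exists>C1 C2. C1 > 0 \<and> C2 > 0 \<and> (\<forall>K\<ge>1. Min ((\<lambda>k. \<integral>\<^sup>+\<omega>. ennreal ((norm (wavg ones G (\<theta> k \<omega>)))^2) \<partial>M) ` {..<K})
              \<le> ennreal (C1 / (real K * \<alpha> K) + C2 * ((1 / (real K * \<alpha> K)) * (\<Sum>k<K. \<alpha> k * (\<epsilon> k)^2))))"
      using C1p C2p part1 unfolding r_def by blast
  next
    assume LK: "(\<lambda>K. (1 / (real K * \<alpha> K)) * (\<Sum>k<K. \<alpha> k * (\<epsilon> k)^2)) \<longlonglongrightarrow> 0"
    have "r \<longlonglongrightarrow> C1 * 0 + C2 * 0"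
    proof -
      have "(\<lambda>K. C1 * (1 / (real K * \<alpha> K))) \<longlonglongrightarrow> C1 * 0" using alpha_lim by (intro tendsto_mult tendsto_const)
      moreover have "(\<lambda>K. C2 * ((1 / (real K * \<alpha> K)) * (\<Sum>k<K. \<alpha> k * (\<epsilon> k)^2))) \<longlonglongrightarrow> C2 * 0" using LK by (intro tendsto_mult tendsto_const)
      ultimately have "(\<lambda>K. C1 * (1 / (real K * \<alpha> K)) + C2 * ((1 / (real K * \<alpha> K)) * (\<Sum>k<K. \<alpha> k * (\<epsilon> k)^2))) \<longlonglongrightarrow> C1 * 0 + C2 * 0"
        by (rule tendsto_add)
      then show ?thesis unfolding r_def by simp
    qed
    then have "r \<longlonglongrightarrow> 0" by simp
    then have "(\<lambda>K. sqrt (r K)) \<longlonglongrightarrow> sqrt 0" by (rule tendsto_real_sqrt)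
    then have "(\<lambda>K. ennreal (sqrt (r K))) \<longlonglongrightarrow> ennreal 0" by (intro tendsto_ennrealI) simp
    then have up: "(\<lambda>K. ennreal (sqrt (r K))) \<longlonglongrightarrow> 0" by simp
    show "(\<lambda>K. Min ((\<lambda>k. \<integral>\<^sup>+\<omega>. ennreal (norm (wavg ones G (\<theta> k \<omega>))) \<partial>M) ` {..<K})) \<longlonglongrightarrow> 0"
    proof (rule tendsto_sandwich[OF _ _ tendsto_const up])
      show "\<forall>\<^sub>F K in sequentially. (0::ennreal) \<le> Min ((\<lambda>k. \<integral>\<^sup>+\<omega>. ennreal (norm (wavg ones G (\<theta> k \<omega>))) \<partial>M) ` {..<K})"
        by simp
      show "\<forall>\<^sub>F K in sequentially. Min ((\<lambda>k. \<integral>\<^sup>+\<omega>. ennreal (norm (wavg ones G (\<theta> k \<omega>))) \<partial>M) ` {..<K}) \<le> ennreal (sqrt (r K))"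
        using part2 by (intro eventually_sequentiallyI[of 1]) auto
    qed
  qed
qed
end
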